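(* Let $M\in\mathbb{R}^{d\times d}$ satisfy $\|M\|\le1$. Then for every $u\in\mathbb{C}^d$ with $\|u\|\le1$ and every integer $n\ge1$, $$\|M^nu\|^2-\|M^{n+1}u\|^2\le\frac{\operatorname{rank}(M)}{n}\le\frac dn.$$
   Context: $\|\cdot\|$ denotes the Euclidean norm for vectors and the spectral norm for matrices. *)

theory Defs
  imports "HOL-Analysis.Analysis"
begin

text \<open>Matrix power (matrix product iterated; note: the type-class power on vec is componentwise).\<close>
primrec matpow :: "'a::semiring_1^'n^'n \<Rightarrow> nat \<Rightarrow> 'a^'n^'n" where
  "matpow A 0 = mat 1"
| "matpow A (Suc k) = A ** matpow A k"

definition cmat :: "real^'n^'m \<Rightarrow> complex^'n^'m" where
  "cmat A = (\<chi> i j. complex_of_real (A $ i $ j))"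

definition spec_norm :: "real^'n^'m \<Rightarrow> real" where
  "spec_norm A = onorm (\<lambda>x. A *v x)"

end

theory Submission
  imports Defs
begin

lemma quad_bound:
  fixes f g :: "real^'n \<Rightarrow> real^'m"
  assumes lf: "linear f" and lg: "linear g" and nn: "\<And>x. norm (g x) \<le> norm (f x)"
    and fin: "finite B"
  shows "(norm (f (\<Sum>b\<in>B. c b *\<^sub>R b)))\<^sup>2 - (norm (g (\<Sum>b\<in>B. c b *\<^sub>R b)))\<^sup>2
     \<le> (\<Sum>b\<in>B. (c b)\<^sup>2) * (\<Sum>b\<in>B. (norm (f b))\<^sup>2 - (norm (g b))\<^sup>2)"
proof -
  define \<beta> where "\<beta> x y = f x \<bullet> f y - g x \<bullet> g y" for x y
  have Qeq: "(norm (f x))\<^sup>2 - (norm (g x))\<^sup>2 = \<beta> x x" for x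
    by (simp add: \<beta>_def power2_norm_eq_inner)
  have Qnn: "\<beta> x x \<ge> 0" for x
  proof -
    have "(norm (g x))\<^sup>2 \<le> (norm (f x))\<^sup>2" by (rule power_mono[OF nn norm_ge_zero])
    then show ?thesis using Qeq[of x] by linarith
  qed
  have sym: "\<beta> x y = \<beta> y x" for x y by (simp add: \<beta>_def inner_commute)
  have lin: "\<beta> (\<Sum>b\<in>B. c b *\<^sub>R b) (\<Sum>b\<in>B. c b *\<^sub>R b) = (\<Sum>a\<in>B. \<Sum>b\<in>B. c a * c b * \<beta> a b)"
    by (simp add: \<beta>_def linear_sum[OF lf] linear_sum[OF lg] linear_cmul[OF lf] linear_cmul[OF lg]
        inner_sum_left inner_sum_right sum_subtractf[symmetric] sum_distrib_left inner_commute algebra_simps)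
  have pair: "c a * c b * \<beta> a b \<le> ((c b)\<^sup>2 * \<beta> a a + (c a)\<^sup>2 * \<beta> b b) / 2" for a b
  proof -
    have "\<beta> (c b *\<^sub>R a - c a *\<^sub>R b) (c b *\<^sub>R a - c a *\<^sub>R b)
       = (c b)\<^sup>2 * \<beta> a a - 2 * (c a * c b * \<beta> a b) + (c a)\<^sup>2 * \<beta> b b"
      using sym[of a b]
      by (simp add: \<beta>_def linear_diff[OF lf] linear_diff[OF lg] linear_cmul[OF lf] linear_cmul[OF lg]
          inner_diff_left inner_diff_right power2_eq_square inner_commute algebra_simps)
    with Qnn[of "c b *\<^sub>R a - c a *\<^sub>R b"] show ?thesis by (simp add: field_simps)
  qed
  have "(\<Sum>a\<in>B. \<Sum>b\<in>B. c a * c b * \<beta> a b) \<le> (\<Sum>a\<in>B. \<Sum>b\<in>B. ((c b)\<^sup>2 * \<beta> a a + (c a)\<^sup>2 * \<beta> b b) / 2)"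
    by (intro sum_mono pair)
  also have "\<dots> = ((\<Sum>a\<in>B. \<Sum>b\<in>B. (c b)\<^sup>2 * \<beta> a a) + (\<Sum>a\<in>B. \<Sum>b\<in>B. (c a)\<^sup>2 * \<beta> b b)) / 2"
    by (simp add: sum.distrib add_divide_distrib sum_divide_distrib[symmetric])
  also have "(\<Sum>a\<in>B. \<Sum>b\<in>B. (c b)\<^sup>2 * \<beta> a a) = (\<Sum>b\<in>B. (c b)\<^sup>2) * (\<Sum>b\<in>B. \<beta> b b)"
    by (subst sum.swap) (simp add: sum_product)
  also have "(\<Sum>a\<in>B. \<Sum>b\<in>B. (c a)\<^sup>2 * \<beta> b b) = (\<Sum>b\<in>B. (c b)\<^sup>2) * (\<Sum>b\<in>B. \<beta> b b)"
    by (simp add: sum_product)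
  finally show ?thesis using Qeq lin by (simp add: mult.commute)
qed

lemma on_expand:
  fixes y :: "real^'n"
  assumes fin: "finite B" and orth: "pairwise orthogonal B" and nrm: "\<And>b. b \<in> B \<Longrightarrow> norm b = 1"
    and y: "y \<in> span B"
  shows "y = (\<Sum>b\<in>B. (y \<bullet> b) *\<^sub>R b)"
proof -
  define z where "z = y - (\<Sum>b\<in>B. (y \<bullet> b) *\<^sub>R b)"
  have zs: "z \<in> span B" unfolding z_def
    by (intro span_diff y span_sum span_scale span_base)
  have "orthogonal z b0" if b0: "b0 \<in> B" for b0
  proof -
    have "(\<Sum>b\<in>B. (y \<bullet> b) *\<^sub>R b) \<bullet> b0 = (\<Sum>b\<in>B. (y \<bullet> b) * (b \<bullet> b0))"
      by (simp add: inner_sum_left)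
    also have "\<dots> = (\<Sum>b\<in>B. if b = b0 then y \<bullet> b0 else 0)"
    proof (rule sum.cong)
      fix b assume "b \<in> B"
      show "(y \<bullet> b) * (b \<bullet> b0) = (if b = b0 then y \<bullet> b0 else 0)"
      proof (cases "b = b0")
        case True
        then show ?thesis using nrm[OF b0] by (simp add: norm_eq_1)
      next
        case False
        then show ?thesis using orth \<open>b \<in> B\<close> b0 by (simp add: pairwise_def orthogonal_def)
      qed
    qed simp
    also have "\<dots> = y \<bullet> b0" using fin b0 by simp
    finally show ?thesis unfolding z_def orthogonal_def by (simp add: inner_diff_left)
  qed
  then have "orthogonal z z" using orthogonal_to_span[OF zs] by (metis orthogonal_commute)
  then have "z = 0" by (simp add: orthogonal_self)
  then show ?thesis by (simp add: z_def)
qed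

lemma matpow_add: "matpow M (j + m) *v x = matpow M j *v (matpow M m *v x)"
  by (induction j) (simp_all add: matrix_vector_mul_assoc[symmetric])

lemma matpow_Suc_v: "matpow M (Suc k) *v x = M *v (matpow M k *v x)"
  by (simp add: matrix_vector_mul_assoc[symmetric])

lemma contr:
  fixes M :: "real^'n^'n"
  assumes "spec_norm M \<le> 1"
  shows "norm (M *v x) \<le> norm x"
proof -
  have bl: "bounded_linear (\<lambda>x. M *v x)" by (simp add: linear_linear)
  have "norm (M *v x) \<le> onorm (\<lambda>x. M *v x) * norm x" by (rule onorm[OF bl])
  also have "\<dots> \<le> 1 * norm x" using assms unfolding spec_norm_def
    by (intro mult_right_mono) auto
  finally show ?thesis by simp
qed

lemma contr_pow:
  fixes M :: "real^'n^'n"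
  assumes "spec_norm M \<le> 1"
  shows "norm (matpow M k *v x) \<le> norm x"
proof (induction k)
  case 0 then show ?case by simp
next
  case (Suc k) then show ?case using contr[OF assms, of "matpow M k *v x"] matpow_Suc_v[of M k x] by simp
qed


lemma real_bound:
  fixes M :: "real^'d^'d" and x :: "real^'d"
  assumes sn: "spec_norm M \<le> 1" and n: "n \<ge> 1"
  shows "real n * ((norm (matpow M n *v x))\<^sup>2 - (norm (matpow M (Suc n) *v x))\<^sup>2)
           \<le> real (rank M) * (norm x)\<^sup>2"
proof -
  define S where "S = range (\<lambda>z. M *v z)"
  have sS: "subspace S" unfolding S_def
    by (rule linear_subspace_image[OF matrix_vector_mul_linear subspace_UNIV])
  obtain B where B: "B \<subseteq> S" "pairwise orthogonal B" "\<And>x. x \<in> B \<Longrightarrow> norm x = 1"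
    "independent B" "card B = dim S" "span B = S"
    using orthonormal_basis_subspace[OF sS] by blast
  have fin: "finite B" using B(4) by (rule independent_imp_finite)
  define Q where "Q j z = (norm (matpow M j *v z))\<^sup>2 - (norm (matpow M (Suc j) *v z))\<^sup>2" for j z
  have Qnn: "Q j z \<ge> 0" for j z
  proof -
    have "norm (matpow M (Suc j) *v z) \<le> norm (matpow M j *v z)"
      using contr[OF sn] matpow_Suc_v by metis
    then have "(norm (matpow M (Suc j) *v z))\<^sup>2 \<le> (norm (matpow M j *v z))\<^sup>2"
      by (rule power_mono) simp
    then show ?thesis unfolding Q_def by linarith
  qed
  define qn where "qn = Q n x"
  have step: "qn \<le> (norm x)\<^sup>2 * (\<Sum>b\<in>B. Q j b)" if j: "j < n" for j
  proof -
    define y where "y = matpow M (n - j) *v x"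
    have "n - j = Suc (n - j - 1)" using j by simp
    then have "y = M *v (matpow M (n - j - 1) *v x)" unfolding y_def by (metis matpow_Suc_v)
    then have yS: "y \<in> span B" using B(6) unfolding S_def by auto
    have ye: "y = (\<Sum>b\<in>B. (y \<bullet> b) *\<^sub>R b)" by (rule on_expand[OF fin B(2) B(3) yS])
    have qy: "qn = Q j y"
    proof -
      have "matpow M n *v x = matpow M j *v y"
        using matpow_add[of M j "n - j" x] j unfolding y_def by simp
      moreover have "matpow M (Suc n) *v x = matpow M (Suc j) *v y"
        using matpow_add[of M "Suc j" "n - j" x] j unfolding y_def by simp
      ultimately show ?thesis unfolding qn_def Q_def by simp
    qed
    have "Q j (\<Sum>b\<in>B. (y \<bullet> b) *\<^sub>R b) \<le> (\<Sum>b\<in>B. (y \<bullet> b)\<^sup>2) * (\<Sum>b\<in>B. Q j b)"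
      unfolding Q_def
      by (rule quad_bound[OF matrix_vector_mul_linear matrix_vector_mul_linear _ fin])
         (metis contr[OF sn] matpow_Suc_v)
    then have q1: "qn \<le> (\<Sum>b\<in>B. (y \<bullet> b)\<^sup>2) * (\<Sum>b\<in>B. Q j b)" using ye qy by simp
    have "(norm y)\<^sup>2 = y \<bullet> (\<Sum>b\<in>B. (y \<bullet> b) *\<^sub>R b)"
      using ye by (metis power2_norm_eq_inner)
    also have "\<dots> = (\<Sum>b\<in>B. (y \<bullet> b)\<^sup>2)" by (simp add: inner_sum_right power2_eq_square)
    finally have ny: "(\<Sum>b\<in>B. (y \<bullet> b)\<^sup>2) = (norm y)\<^sup>2" by simp
    have "norm y \<le> norm x" unfolding y_def by (rule contr_pow[OF sn])
    then have "(norm y)\<^sup>2 \<le> (norm x)\<^sup>2" by (rule power_mono) simp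
    moreover have "(\<Sum>b\<in>B. Q j b) \<ge> 0" by (intro sum_nonneg Qnn)
    ultimately have "(norm y)\<^sup>2 * (\<Sum>b\<in>B. Q j b) \<le> (norm x)\<^sup>2 * (\<Sum>b\<in>B. Q j b)"
      by (rule mult_right_mono)
    then show ?thesis using q1 ny by simp
  qed
  have tel: "(\<Sum>j<n. Q j b) \<le> 1" if "b \<in> B" for b
  proof -
    have "(\<Sum>j<n. Q j b) = (norm (matpow M 0 *v b))\<^sup>2 - (norm (matpow M n *v b))\<^sup>2"
      unfolding Q_def by (rule sum_lessThan_telescope')
    also have "\<dots> \<le> 1" using B(3)[OF that] by simp
    finally show ?thesis .
  qed
  have "real n * qn = (\<Sum>j<n. qn)" by simp
  also have "\<dots> \<le> (\<Sum>j<n. (norm x)\<^sup>2 * (\<Sum>b\<in>B. Q j b))" by (intro sum_mono step) simp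
  also have "\<dots> = (norm x)\<^sup>2 * (\<Sum>b\<in>B. \<Sum>j<n. Q j b)"
    by (simp add: sum_distrib_left[symmetric] sum.swap[of _ B])
  also have "\<dots> \<le> (norm x)\<^sup>2 * (\<Sum>b\<in>B. 1)"
    by (intro mult_left_mono sum_mono tel) simp_all
  also have "\<dots> = (norm x)\<^sup>2 * real (rank M)"
    using B(5) by (simp add: rank_dim_range S_def)
  finally show ?thesis unfolding qn_def Q_def by (simp add: mult.commute)
qed


lemma norm_cvec_sq: "(norm (w :: complex^'d))\<^sup>2 = (\<Sum>i\<in>UNIV. (Re (w$i))\<^sup>2 + (Im (w$i))\<^sup>2)"
  unfolding power2_norm_eq_inner inner_vec_def by (simp add: inner_complex_def power2_eq_square)

lemma norm_rvec_sq: "(norm (v :: real^'d))\<^sup>2 = (\<Sum>i\<in>UNIV. (v$i)\<^sup>2)"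
  unfolding power2_norm_eq_inner inner_vec_def by (simp add: power2_eq_square)

lemma cmat_split:
  fixes A :: "real^'d^'d" and u :: "complex^'d"
  shows "(norm (cmat A *v u))\<^sup>2 = (norm (A *v (\<chi> i. Re (u$i))))\<^sup>2 + (norm (A *v (\<chi> i. Im (u$i))))\<^sup>2"
proof -
  have re: "Re ((cmat A *v u)$i) = (A *v (\<chi> i. Re (u$i)))$i" for i
    by (simp add: matrix_vector_mult_def cmat_def Re_sum)
  have im: "Im ((cmat A *v u)$i) = (A *v (\<chi> i. Im (u$i)))$i" for i
    by (simp add: matrix_vector_mult_def cmat_def Im_sum)
  show ?thesis unfolding norm_cvec_sq norm_rvec_sq re im by (simp add: sum.distrib)
qed

lemma norm_u_split:
  fixes u :: "complex^'d"
  shows "(norm u)\<^sup>2 = (norm ((\<chi> i. Re (u$i)) :: real^'d))\<^sup>2 + (norm ((\<chi> i. Im (u$i)) :: real^'d))\<^sup>2"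
  unfolding norm_cvec_sq norm_rvec_sq by (simp add: sum.distrib)

theorem mainTheorem15:
  fixes M :: "real^'d^'d" and u :: "complex^'d" and n :: nat
  assumes "spec_norm M \<le> 1" and "norm u \<le> 1" and "n \<ge> 1"
  shows "(norm (cmat (matpow M n) *v u))\<^sup>2 - (norm (cmat (matpow M (Suc n)) *v u))\<^sup>2
           \<le> real (rank M) / real n
       \<and> real (rank M) / real n \<le> real CARD('d) / real n"
proof
  define a :: "real^'d" where "a = (\<chi> i. Re (u$i))"
  define b :: "real^'d" where "b = (\<chi> i. Im (u$i))"
  have npos: "real n > 0" using assms(3) by simp
  have ra: "real n * ((norm (matpow M n *v a))\<^sup>2 - (norm (matpow M (Suc n) *v a))\<^sup>2) \<le> real (rank M) * (norm a)\<^sup>2"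
    by (rule real_bound[OF assms(1) assms(3)])
  have rb: "real n * ((norm (matpow M n *v b))\<^sup>2 - (norm (matpow M (Suc n) *v b))\<^sup>2) \<le> real (rank M) * (norm b)\<^sup>2"
    by (rule real_bound[OF assms(1) assms(3)])
  have nu: "(norm u)\<^sup>2 = (norm a)\<^sup>2 + (norm b)\<^sup>2" unfolding a_def b_def by (rule norm_u_split)
  have u1: "(norm u)\<^sup>2 \<le> 1" using assms(2) by (simp add: power_le_one)
  define L where "L = (norm (cmat (matpow M n) *v u))\<^sup>2 - (norm (cmat (matpow M (Suc n)) *v u))\<^sup>2"
  have L: "L = ((norm (matpow M n *v a))\<^sup>2 - (norm (matpow M (Suc n) *v a))\<^sup>2)
           + ((norm (matpow M n *v b))\<^sup>2 - (norm (matpow M (Suc n) *v b))\<^sup>2)"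
    unfolding L_def a_def b_def cmat_split by simp
  have "real n * L = real n * ((norm (matpow M n *v a))\<^sup>2 - (norm (matpow M (Suc n) *v a))\<^sup>2)
      + real n * ((norm (matpow M n *v b))\<^sup>2 - (norm (matpow M (Suc n) *v b))\<^sup>2)"
    unfolding L by (simp only: distrib_left)
  also have "\<dots> \<le> real (rank M) * (norm a)\<^sup>2 + real (rank M) * (norm b)\<^sup>2" using ra rb by linarith
  also have "\<dots> = real (rank M) * (norm u)\<^sup>2" using nu by (simp add: distrib_left)
  also have "\<dots> \<le> real (rank M) * 1" using u1 by (intro mult_left_mono) simp_all
  finally have "real n * L \<le> real (rank M)" by simp
  then show "L \<le> real (rank M) / real n" using npos by (simp add: field_simps)
next
  have "rank M \<le> CARD('d)" using rank_bound[of M] by simp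
  then show "real (rank M) / real n \<le> real CARD('d) / real n"
    by (intro divide_right_mono) simp_all
qed

end
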